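(* In $NOM$, for all finite sequences $\Gamma,\Delta$ of formulas and all formulas $\phi,\psi,\chi$, the following rules are derivable: (i) from $\Gamma,\phi,\phi,\Delta\vdash\psi$ infer $\Gamma,\phi,\Delta\vdash\psi$; (ii) from $\Gamma,\phi,\Delta\vdash\psi$ infer $\Gamma,\phi,\phi,\Delta\vdash\psi$; (iii) from $\Gamma\vdash\phi$ and $\Gamma,\phi,\Delta\vdash\psi$ infer $\Gamma,\Delta\vdash\psi$; (iv) from $\Gamma\vdash\phi$ and $\Gamma,\Delta\vdash\psi$ infer $\Gamma,\phi,\Delta\vdash\psi$; (v) from $\Gamma,\phi,\psi\vdash\phi$, $\Gamma,\phi,\psi,\Delta\vdash\chi$ and $\Gamma,\psi,\phi\vdash\psi$ infer $\Gamma,\psi,\phi,\Delta\vdash\chi$; (vi) $\Gamma,\neg\phi,\phi,\Delta\vdash\psi$ is derivable; (vii) $\Gamma,\phi,\neg\phi,\Delta\vdash\psi$ is derivable; (viii) from $\Gamma,\neg\neg\phi,\Delta\vdash\psi$ infer $\Gamma,\phi,\Delta\vdash\psi$; (ix) from $\Gamma,\phi,\Delta\vdash\psi$ infer $\Gamma,\neg\neg\phi,\Delta\vdash\psi$; (x) from $\Gamma,\phi,\Delta\vdash\psi$ and $\Gamma,\neg\phi,\Delta\vdash\psi$ infer $\Gamma,\Delta\vdash\psi$.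
   Context: The propositional deductive system $NOM$: formulas are built from propositional letters using $\wedge$, $\rightarrow$, $\neg$. Sequents are $\phi_1,\ldots,\phi_n\vdash\psi$ ($n\ge0$) with antecedent a finite ordered sequence; commas denote concatenation. With $\Gamma$ a finite possibly empty sequence of formulas and $\phi,\psi,\chi$ formulas, the rules of $NOM$ are: (assumption) $\Gamma,\phi\vdash\phi$; (cut) $\Gamma\vdash\phi$, $\Gamma,\phi\vdash\psi$ $\Rightarrow$ $\Gamma\vdash\psi$; (paste) $\Gamma\vdash\phi$, $\Gamma\vdash\psi$ $\Rightarrow$ $\Gamma,\phi\vdash\psi$; (compatible exchange) $\Gamma,\phi,\psi\vdash\phi$, $\Gamma,\phi,\psi\vdash\chi$, $\Gamma,\psi,\phi\vdash\psi$ $\Rightarrow$ $\Gamma,\psi,\phi\vdash\chi$; ($\wedge$-intro) $\Gamma\vdash\phi$, $\Gamma\vdash\psi$ $\Rightarrow$ $\Gamma\vdash\phi\wedge\psi$; ($\wedge$-elim) $\Gamma\vdash\phi\wedge\psi$ $\Rightarrow$ $\Gamma\vdash\phi$ and $\Rightarrow$ $\Gamma\vdash\psi$; ($\rightarrow$-intro) $\Gamma,\phi\vdash\psi$ $\Rightarrow$ $\Gamma\vdash\phi\rightarrow\psi$; ($\rightarrow$-elim) $\Gamma\vdash\phi\rightarrow\psi$ $\Rightarrow$ $\Gamma,\phi\vdash\psi$; (excluded middle) $\Gamma,\phi\vdash\psi$, $\Gamma,\neg\phi\vdash\psi$ $\Rightarrow$ $\Gamma\vdash\psi$; (explosion) $\Gamma\vdash\neg\phi$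 $\Rightarrow$ $\Gamma,\phi\vdash\psi$. A rule schema is derivable if in every instance its conclusion can be derived from its premises using these rules. *)

theory Defs
  imports Main
begin

datatype 'a form = Var 'a | Conj "'a form" "'a form" | Imp "'a form" "'a form" | Neg "'a form"

type_synonym 'a sequent = "'a form list \<times> 'a form"

inductive nom :: "'a sequent set \<Rightarrow> 'a form list \<Rightarrow> 'a form \<Rightarrow> bool" for H where
  premise: "(G, p) \<in> H \<Longrightarrow> nom H G p"
| assumption: "nom H (G @ [p]) p"
| cut: "nom H G p \<Longrightarrow> nom H (G @ [p]) q \<Longrightarrow> nom H G q"
| paste: "nom H G p \<Longrightarrow> nom H G q \<Longrightarrow> nom H (G @ [p]) q"
| compat_exchange: "nom H (G @ [p, q]) p \<Longrightarrow> nom H (G @ [p, q]) r \<Longrightarrow> nom H (G @ [q, p]) q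
    \<Longrightarrow> nom H (G @ [q, p]) r"
| conjI: "nom H G p \<Longrightarrow> nom H G q \<Longrightarrow> nom H G (Conj p q)"
| conjE1: "nom H G (Conj p q) \<Longrightarrow> nom H G p"
| conjE2: "nom H G (Conj p q) \<Longrightarrow> nom H G q"
| impI: "nom H (G @ [p]) q \<Longrightarrow> nom H G (Imp p q)"
| impE: "nom H G (Imp p q) \<Longrightarrow> nom H (G @ [p]) q"
| excluded_middle: "nom H (G @ [p]) q \<Longrightarrow> nom H (G @ [Neg p]) q \<Longrightarrow> nom H G q"
| explosion: "nom H G (Neg p) \<Longrightarrow> nom H (G @ [p]) q"

definition derivable_rule :: "'a sequent list \<Rightarrow> 'a sequent \<Rightarrow> bool" where
  "derivable_rule Ps C \<longleftrightarrow> nom (set Ps) (fst C) (snd C)"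

end

theory Submission
  imports Defs
begin

lemma curry_nom: "nom H (X @ D) q \<Longrightarrow> nom H X (foldr Imp D q)"
proof (induction D arbitrary: X)
  case Nil then show ?case by simp
next
  case (Cons d D)
  have "nom H ((X @ [d]) @ D) q" using Cons.prems by simp
  then have "nom H (X @ [d]) (foldr Imp D q)" by (rule Cons.IH)
  then show ?case by (simp add: nom.impI)
qed

lemma uncurry_nom: "nom H X (foldr Imp D q) \<Longrightarrow> nom H (X @ D) q"
proof (induction D arbitrary: X)
  case Nil then show ?case by simp
next
  case (Cons d D)
  have "nom H (X @ [d]) (foldr Imp D q)" using Cons.prems by (simp add: nom.impE)
  then have "nom H ((X @ [d]) @ D) q" by (rule Cons.IH)
  then show ?case by simp
qed

lemma asm2: "nom H (G @ [a, b]) b"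
  using nom.assumption[of H "G @ [a]" b] by simp

lemma paste2: "nom H (G @ [a]) b \<Longrightarrow> nom H (G @ [a]) c \<Longrightarrow> nom H (G @ [a, b]) c"
  using nom.paste[of H "G @ [a]" b c] by simp

lemma expl2: "nom H (G @ [a]) (Neg b) \<Longrightarrow> nom H (G @ [a, b]) c"
  using nom.explosion[of H "G @ [a]" b c] by simp

lemma em2: "nom H (G @ [a, b]) c \<Longrightarrow> nom H (G @ [a, Neg b]) c \<Longrightarrow> nom H (G @ [a]) c"
  using nom.excluded_middle[of H "G @ [a]" b c] by simp

lemma cut2: "nom H (G @ [a]) b \<Longrightarrow> nom H (G @ [a, b]) c \<Longrightarrow> nom H (G @ [a]) c"
  using nom.cut[of H "G @ [a]" b c] by simp

lemma dn1: "nom H (G @ [Neg (Neg p)]) p"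
  by (rule em2[where b=p]) (auto intro: asm2 expl2 nom.assumption)

lemma dn2: "nom H (G @ [Neg (Neg p), p]) (Neg (Neg p))"
  by (rule paste2[OF dn1 nom.assumption])

lemma dn3: "nom H G (Imp p (Neg (Neg p)))"
proof (rule nom.excluded_middle[where p="Neg p"])
  show "nom H (G @ [Neg p]) (Imp p (Neg (Neg p)))"
    by (rule nom.impI, rule nom.explosion, rule nom.assumption)
  show "nom H (G @ [Neg (Neg p)]) (Imp p (Neg (Neg p)))"
    by (rule nom.impI) (simp add: dn2)
qed

lemma dn4: "nom H (G @ [p]) (Neg (Neg p))"
  by (rule nom.impE[OF dn3])

lemma dn5: "nom H (G @ [p, Neg (Neg p)]) p"
proof -
  have a: "nom H ((G @ [p, Neg (Neg p)]) @ [p]) p" by (rule nom.assumption)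
  have b: "nom H ((G @ [p, Neg (Neg p)]) @ [Neg p]) p"
    by (rule nom.explosion) (simp add: asm2)
  show ?thesis by (rule nom.excluded_middle[OF a b])
qed

lemma nn_to_p: "nom H (G @ [Neg (Neg p)]) r \<Longrightarrow> nom H (G @ [p, Neg (Neg p)]) r"
  apply (rule nom.compat_exchange[where p="Neg (Neg p)"])
    apply (rule paste2[OF dn1 nom.assumption])
   apply (rule paste2[OF dn1], assumption)
  apply (rule dn5)
  done

lemma p_to_nn: "nom H (G @ [p]) r \<Longrightarrow> nom H (G @ [Neg (Neg p), p]) r"
  apply (rule nom.compat_exchange[where p=p])
    apply (rule dn5)
   apply (rule paste2[OF dn4], assumption)
  apply (rule dn2)
  done

lemma prem: "(X, q) \<in> H \<Longrightarrow> nom H X q" by (rule nom.premise)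

theorem theorem2p6:
  fixes G D :: "'a form list" and p q r :: "'a form"
  shows
   "derivable_rule [(G @ [p, p] @ D, q)] (G @ [p] @ D, q)
  \<and> derivable_rule [(G @ [p] @ D, q)] (G @ [p, p] @ D, q)
  \<and> derivable_rule [(G, p), (G @ [p] @ D, q)] (G @ D, q)
  \<and> derivable_rule [(G, p), (G @ D, q)] (G @ [p] @ D, q)
  \<and> derivable_rule [(G @ [p, q], p), (G @ [p, q] @ D, r), (G @ [q, p], q)] (G @ [q, p] @ D, r)
  \<and> derivable_rule [] (G @ [Neg p, p] @ D, q)
  \<and> derivable_rule [] (G @ [p, Neg p] @ D, q)
  \<and> derivable_rule [(G @ [Neg (Neg p)] @ D, q)] (G @ [p] @ D, q)
  \<and> derivable_rule [(G @ [p] @ D, q)] (G @ [Neg (Neg p)] @ D, q)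
  \<and> derivable_rule [(G @ [p] @ D, q), (G @ [Neg p] @ D, q)] (G @ D, q)"
proof -
  let ?Q = "foldr Imp D q"
  have "\<And>X H. (X @ D, q) \<in> H \<Longrightarrow> nom H X ?Q"
    by (rule curry_nom, rule nom.premise) simp
  note c = this
  have u: "\<And>X H. nom H X ?Q \<Longrightarrow> nom H (X @ D) q" by (rule uncurry_nom)
  have i: "derivable_rule [(G @ [p, p] @ D, q)] (G @ [p] @ D, q)"
    unfolding derivable_rule_def
    using u[OF cut2[OF nom.assumption c]] by simp
  have ii: "derivable_rule [(G @ [p] @ D, q)] (G @ [p, p] @ D, q)"
    unfolding derivable_rule_def
    using u[OF paste2[OF nom.assumption c]] by simp
  have iii: "derivable_rule [(G, p), (G @ [p] @ D, q)] (G @ D, q)"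
    unfolding derivable_rule_def
    using u[OF nom.cut[OF prem c]] by simp
  have iv: "derivable_rule [(G, p), (G @ D, q)] (G @ [p] @ D, q)"
    unfolding derivable_rule_def
    using u[OF nom.paste[OF prem c]] by simp
  have v: "derivable_rule [(G @ [p, q], p), (G @ [p, q] @ D, r), (G @ [q, p], q)] (G @ [q, p] @ D, r)"
    unfolding derivable_rule_def
  proof -
    let ?H = "set [(G @ [p, q], p), (G @ [p, q] @ D, r), (G @ [q, p], q)]"
    have "nom ?H (G @ [p, q]) (foldr Imp D r)"
      by (rule curry_nom, rule nom.premise) simp
    then have "nom ?H (G @ [q, p]) (foldr Imp D r)"
      by (rule nom.compat_exchange[rotated]) (auto intro: nom.premise)
    then show "nom ?H (fst (G @ [q, p] @ D, r)) (snd (G @ [q, p] @ D, r))"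
      using uncurry_nom by fastforce
  qed
  have vi: "derivable_rule [] (G @ [Neg p, p] @ D, q)"
    unfolding derivable_rule_def
    using u[OF expl2[OF nom.assumption]] by simp
  have vii: "derivable_rule [] (G @ [p, Neg p] @ D, q)"
    unfolding derivable_rule_def
    using u[OF expl2[OF dn4]] by simp
  have viii: "derivable_rule [(G @ [Neg (Neg p)] @ D, q)] (G @ [p] @ D, q)"
    unfolding derivable_rule_def
    using u[OF cut2[OF dn4 nn_to_p[OF c]]] by simp
  have ix: "derivable_rule [(G @ [p] @ D, q)] (G @ [Neg (Neg p)] @ D, q)"
    unfolding derivable_rule_def
    using u[OF cut2[OF dn1 p_to_nn[OF c]]] by simp
  have x: "derivable_rule [(G @ [p] @ D, q), (G @ [Neg p] @ D, q)] (G @ D, q)"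
    unfolding derivable_rule_def
  proof -
    let ?H = "set [(G @ [p] @ D, q), (G @ [Neg p] @ D, q)]"
    have a: "nom ?H (G @ [p]) ?Q" by (rule curry_nom, rule nom.premise) simp
    have b: "nom ?H (G @ [Neg p]) ?Q" by (rule curry_nom, rule nom.premise) simp
    show "nom ?H (fst (G @ D, q)) (snd (G @ D, q))"
      using u[OF nom.excluded_middle[OF a b]] by simp
  qed
  show ?thesis using i ii iii iv v vi vii viii ix x by blast
qed

end
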